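(* For $z,\zeta \in \mathbb C\setminus \mathbb R$, $z \ne \overline \zeta$, \[ \frac{\mathcal P(z)-\mathcal P(\zeta)^*}{z-\overline{\zeta}} = \binom{\mathcal B^*}{-\mathcal A^*} \big(\mathcal M(\zeta)^*\mathcal B^*-\mathcal A^*\big)^{-1} \frac{\mathcal M(z)-\mathcal M(\zeta)^*}{z-\overline \zeta} \big(\mathcal B\,\mathcal M(z)-\mathcal A\big)^{-1} \big( \mathcal B \ \ -\mathcal A \big). \]
   Context: Let $\mathcal A,\mathcal B\in M_n(\mathbb C)$ with ${\rm rank}(\mathcal A\ \mathcal B)=n$ and $\mathcal A\mathcal B^*=\mathcal B\mathcal A^*$. Let $\mathcal M(z)={\rm diag}(m_1(z),\dots,m_n(z))$, where $m_j$ are the Weyl–Titchmarsh functions of Dirac-Krein operators on the edges $e_j=[v,v_j]$ of a star graph (each $m_j$ is a meromorphic Nevanlinna function with $\operatorname{Im} m_j(z)>0$ for $\operatorname{Im} z>0$), so that $\mathcal B\mathcal M(z)-\mathcal A$ is invertible for $z\in\mathbb C\setminus\mathbb R$. Define the $2n\times2n$ matrix function $\mathcal P(z) := \begin{pmatrix}0_n&0_n\\0_n&\mathcal M(z)\end{pmatrix} - \begin{pmatrix}-I_n\\\mathcal M(z)\end{pmatrix}\big(\mathcal B\mathcal M(z)-\mathcal A\big)^{-1} \mathcal B \,\big(-I_n \ \ \mathcal M(z) \big)$. *)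

theory Defs
  imports "HOL-Complex_Analysis.Complex_Analysis"
    "Jordan_Normal_Form.Schur_Decomposition"
    "Jordan_Normal_Form.Gauss_Jordan_Elimination"
    "Jordan_Normal_Form.DL_Rank"
begin

definition append_cols :: "'a :: zero mat \<Rightarrow> 'a mat \<Rightarrow> 'a mat" where
  "append_cols A B = mat (dim_row A) (dim_col A + dim_col B)
     (\<lambda>(i,j). if j < dim_col A then A $$ (i,j) else B $$ (i, j - dim_col A))"

definition minv :: "complex mat \<Rightarrow> complex mat" where
  "minv X = the (mat_inverse X)"

definition Mdiag :: "nat \<Rightarrow> (nat \<Rightarrow> complex \<Rightarrow> complex) \<Rightarrow> complex \<Rightarrow> complex mat" where
  "Mdiag n m z = mat_diag n (\<lambda>j. m j z)"

definition Pmat :: "nat \<Rightarrow> complex mat \<Rightarrow> complex mat \<Rightarrow> (nat \<Rightarrow> complex \<Rightarrow> complex) \<Rightarrow> complex \<Rightarrow> complex mat" where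
  "Pmat n A B m z =
     four_block_mat (0\<^sub>m n n) (0\<^sub>m n n) (0\<^sub>m n n) (Mdiag n m z)
     - ((- 1\<^sub>m n) @\<^sub>r Mdiag n m z) * minv (B * Mdiag n m z - A) * B
         * append_cols (- 1\<^sub>m n) (Mdiag n m z)"

end

theory Submission imports Defs begin


lemma rank_left_null:
  fixes G :: "complex mat"
  assumes G: "G \<in> carrier_mat n k" and r: "vec_space.rank n G = n"
    and v: "v \<in> carrier_vec n" and Gv: "transpose_mat G *\<^sub>v v = 0\<^sub>v k"
  shows "v = 0\<^sub>v n"
proof -
  interpret vec_space "TYPE(complex)" n .
  obtain S where max: "maximal S (\<lambda>T. T \<subseteq> set (cols G) \<and> lin_indpt T)"
    using maximal_exists[of "(\<lambda>T. T \<subseteq> set (cols G) \<and> lin_indpt T)" "card (set (cols G))" "{}"]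
    by (meson List.finite_set card_mono empty_iff empty_subsetI finite_lin_indpt2 rev_finite_subset)
  have cS: "card S = n" using rank_card_indpt[OF G max] r by simp
  have Ssub: "S \<subseteq> set (cols G)" and li: "lin_indpt S" using max unfolding maximal_def by auto
  have colsC: "set (cols G) \<subseteq> carrier_vec n" using cols_dim[of G] carrier_matD(1)[OF G] by simp
  have SC: "S \<subseteq> carrier_vec n" using Ssub colsC by auto
  have fS: "finite S" using Ssub List.finite_set rev_finite_subset by blast
  have "basis S" by (rule dim_li_is_basis) (use fS SC li cS dim_is_n in auto)
  hence spanS: "span S = carrier V" unfolding basis_def by auto
  have "span S \<subseteq> span (set (cols G))" by (rule span_is_monotone[OF Ssub])
  hence spanG: "carrier_vec n \<subseteq> col_space G" unfolding col_space_def using spanS by simp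
  show ?thesis
  proof (rule eq_vecI)
    fix i assume "i < dim_vec (0\<^sub>v n :: complex vec)"
    hence i: "i < n" by simp
    have "unit_vec n i \<in> col_space G" using spanG by auto
    then obtain x where x: "x \<in> carrier_vec k" and Gx: "G *\<^sub>v x = unit_vec n i"
      unfolding col_space_eq[OF G] using G by auto
    have "v $ i = unit_vec n i \<bullet> v" using i v by simp
    also have "\<dots> = (G *\<^sub>v x) \<bullet> v" using Gx by simp
    also have "\<dots> = x \<bullet> (transpose_mat G *\<^sub>v v)"
      using G x v by (simp add: scalar_prod_def mult_mat_vec_def sum_distrib_left sum_distrib_right
          sum.swap[of _ "{0..<n}"] ac_simps)
    also have "\<dots> = 0" using Gv x by simp
    finally show "v $ i = 0\<^sub>v n $ i" using i by simp
  qed (use v in simp)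
qed

lemma adj_eq: "mat_adjoint (A::complex mat) = mat (dim_col A) (dim_row A) (\<lambda>(i,j). cnj (A $$ (j,i)))"
  unfolding mat_adjoint_def mat_of_rows_def
  by (rule eq_matI) simp_all

lemma adj_index[simp]: "i < dim_col A \<Longrightarrow> j < dim_row A \<Longrightarrow> mat_adjoint (A::complex mat) $$ (i,j) = cnj (A $$ (j,i))"
  by (simp add: adj_eq)
lemma adj_dim[simp]: "dim_row (mat_adjoint (A::complex mat)) = dim_col A" "dim_col (mat_adjoint (A::complex mat)) = dim_row A"
  by (simp_all add: adj_eq)
lemma adj_carrier[simp,intro]: "A \<in> carrier_mat r c \<Longrightarrow> mat_adjoint (A::complex mat) \<in> carrier_mat c r"
  by (metis adj_dim carrier_matD carrier_matI)

lemma adj_mult: "A \<in> carrier_mat r k \<Longrightarrow> B \<in> carrier_mat k c \<Longrightarrow>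
  mat_adjoint (A * (B::complex mat)) = mat_adjoint B * mat_adjoint A"
  apply (rule eq_matI)
  apply (simp_all add: scalar_prod_def)
  apply (rule sum.cong, auto)
  done

lemma adj_minus: "A \<in> carrier_mat r c \<Longrightarrow> B \<in> carrier_mat r c \<Longrightarrow>
  mat_adjoint (A - (B::complex mat)) = mat_adjoint A - mat_adjoint B"
  by (rule eq_matI) simp_all
lemma adj_add: "A \<in> carrier_mat r c \<Longrightarrow> B \<in> carrier_mat r c \<Longrightarrow>
  mat_adjoint (A + (B::complex mat)) = mat_adjoint A + mat_adjoint B"
  by (rule eq_matI) simp_all
lemma adj_uminus: "mat_adjoint (- (A::complex mat)) = - mat_adjoint A"
  by (rule eq_matI) simp_all
lemma adj_adj: "mat_adjoint (mat_adjoint (A::complex mat)) = A"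
  by (rule eq_matI) simp_all
lemma adj_one: "mat_adjoint (1\<^sub>m n :: complex mat) = 1\<^sub>m n"
  by (rule eq_matI) simp_all
lemma adj_zero: "mat_adjoint (0\<^sub>m r c :: complex mat) = 0\<^sub>m c r"
  by (rule eq_matI) simp_all
lemma adj_smult: "mat_adjoint (a \<cdot>\<^sub>m (A::complex mat)) = cnj a \<cdot>\<^sub>m mat_adjoint A"
  by (rule eq_matI) simp_all


lemma adj_fbm: "A \<in> carrier_mat r1 c1 \<Longrightarrow> B \<in> carrier_mat r1 c2 \<Longrightarrow> C \<in> carrier_mat r2 c1 \<Longrightarrow> D \<in> carrier_mat r2 c2 \<Longrightarrow>
  mat_adjoint (four_block_mat A B C D :: complex mat) = four_block_mat (mat_adjoint A) (mat_adjoint C) (mat_adjoint B) (mat_adjoint D)"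
  by (rule eq_matI) (auto simp: carrier_matD)

lemma minus_fbm: assumes
  c1: "A1 \<in> carrier_mat nr1 nc1" "B1 \<in> carrier_mat nr1 nc2" "C1 \<in> carrier_mat nr2 nc1" "D1 \<in> carrier_mat nr2 nc2" and
  c2: "A2 \<in> carrier_mat nr1 nc1" "B2 \<in> carrier_mat nr1 nc2" "C2 \<in> carrier_mat nr2 nc1" "D2 \<in> carrier_mat nr2 nc2"
  shows "four_block_mat A1 B1 C1 D1 - four_block_mat A2 B2 C2 D2
  = four_block_mat (A1 - A2) (B1 - B2) (C1 - C2) (D1 - (D2 :: complex mat))"
  by (rule eq_matI, insert assms, auto simp: carrier_matD)

lemma Mdiag_carrier[simp,intro]: "Mdiag n m z \<in> carrier_mat n n"
  by (simp add: Mdiag_def)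

lemma adj_Mdiag: assumes "\<And>j. j < n \<Longrightarrow> m j (cnj z) = cnj (m j z)"
  shows "mat_adjoint (Mdiag n m z) = Mdiag n m (cnj z)"
  by (rule eq_matI) (auto simp: Mdiag_def mat_diag_def assms)

lemma append_cols_carrier[simp,intro]: "A \<in> carrier_mat r c1 \<Longrightarrow> B \<in> carrier_mat r c2 \<Longrightarrow> append_cols A B \<in> carrier_mat r (c1+c2)"
  unfolding append_cols_def by (intro carrier_matI) (auto simp: carrier_matD)

lemma mult_append_rows: assumes A: "A \<in> carrier_mat r1 k" and B: "B \<in> carrier_mat r2 k" and C: "C \<in> carrier_mat k c"
  shows "(A @\<^sub>r B) * C = (A * C) @\<^sub>r (B * (C :: complex mat))"
  apply (rule eq_matI)
  using A B C apply (auto simp: append_rows_def carrier_matD scalar_prod_def row_def col_def intro!: sum.cong)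
  done

lemma append_rows_mult_cols: assumes A: "A \<in> carrier_mat r1 k" and B: "B \<in> carrier_mat r2 k"
  and C: "C \<in> carrier_mat k c1" and D: "D \<in> carrier_mat k c2"
  shows "(A @\<^sub>r B) * append_cols C D = four_block_mat (A * C) (A * D) (B * C) (B * (D :: complex mat))"
  apply (rule eq_matI)
  using A B C D apply (auto simp: append_rows_def append_cols_def carrier_matD scalar_prod_def row_def col_def intro!: sum.cong)
  done

lemma minv_eq: assumes K: "K \<in> carrier_mat n n" and W: "W \<in> carrier_mat n n"
  and KW: "K * W = 1\<^sub>m n" and WK: "W * K = 1\<^sub>m n"
  shows "minv K = W"
proof (cases "mat_inverse K")
  case None
  from mat_inverse(1)[OF K None, of n]
  have "K \<notin> Units (ring_mat TYPE(complex) n n)" .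
  moreover have "K \<in> Units (ring_mat TYPE(complex) n n)"
    unfolding Units_def ring_mat_def using K W KW WK by auto
  ultimately show ?thesis by blast
next
  case (Some W')
  from mat_inverse(2)[OF K Some] have 1: "K * W' = 1\<^sub>m n" "W' * K = 1\<^sub>m n" "W' \<in> carrier_mat n n" by auto
  have "W' = W' * (K * W)" using KW 1(3) by simp
  also have "\<dots> = (W' * K) * W" using 1(3) K W by (simp add: assoc_mult_mat)
  also have "\<dots> = W" using 1 W by simp
  finally show ?thesis unfolding minv_def Some by simp
qed



lemma triple_sum:
  fixes v :: "nat \<Rightarrow> complex"
  shows "(\<Sum>j<n. (\<Sum>i<n. v i * P i j) * cnj (\<Sum>k<n. v k * Q k j)) =
    (\<Sum>i<n. \<Sum>k<n. v i * cnj (v k) * (\<Sum>j<n. P i j * cnj (Q k j)))"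
proof -
  have "(\<Sum>j<n. (\<Sum>i<n. v i * P i j) * cnj (\<Sum>k<n. v k * Q k j)) =
     (\<Sum>j<n. \<Sum>i<n. \<Sum>k<n. v i * cnj (v k) * (P i j * cnj (Q k j)))"
    apply (simp add: sum_distrib_left sum_distrib_right mult_ac)
    apply (rule sum.cong[OF refl])
    apply (rule sum.swap)
    done
  also have "\<dots> = (\<Sum>i<n. \<Sum>j<n. \<Sum>k<n. v i * cnj (v k) * (P i j * cnj (Q k j)))"
    by (rule sum.swap)
  also have "\<dots> = (\<Sum>i<n. \<Sum>k<n. \<Sum>j<n. v i * cnj (v k) * (P i j * cnj (Q k j)))"
    by (rule sum.cong[OF refl], rule sum.swap)
  also have "\<dots> = (\<Sum>i<n. \<Sum>k<n. v i * cnj (v k) * (\<Sum>j<n. P i j * cnj (Q k j)))"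
    by (simp add: sum_distrib_left)
  finally show ?thesis .
qed

lemma inv_core:
  fixes A B :: "complex mat" and m :: "nat \<Rightarrow> complex \<Rightarrow> complex"
  assumes A: "A \<in> carrier_mat n n" and B: "B \<in> carrier_mat n n"
    and rank: "vec_space.rank n (append_cols A B) = n"
    and sym: "A * mat_adjoint B = B * mat_adjoint A"
    and sgn: "(\<forall>j<n. Im (m j w) > 0) \<or> (\<forall>j<n. Im (m j w) < 0)"
  shows "det (B * Mdiag n m w - A) \<noteq> 0"
proof
  define K where "K = B * Mdiag n m w - A"
  have K: "K \<in> carrier_mat n n" unfolding K_def using A B by auto
  assume "det (B * Mdiag n m w - A) = 0"
  hence "det (transpose_mat K) = 0" unfolding K_def[symmetric] using det_transpose[OF K] by simp
  then obtain v where v: "v \<in> carrier_vec n" and v0: "v \<noteq> 0\<^sub>v n" and Kv: "transpose_mat K *\<^sub>v v = 0\<^sub>v n"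
    using det_0_iff_vec_prod_zero[of "transpose_mat K" n] K by auto
  define a where "a j = (\<Sum>i<n. v $ i * A $$ (i,j))" for j
  define b where "b j = (\<Sum>i<n. v $ i * B $$ (i,j))" for j
  have BL: "B * Mdiag n m w = mat n n (\<lambda>(i,j). B $$ (i,j) * m j w)"
    unfolding Mdiag_def using mat_diag_mult_right[OF B] by simp
  have ab: "a j = m j w * b j" if j: "j < n" for j
  proof -
    have "0 = (transpose_mat K *\<^sub>v v) $ j" using Kv j by simp
    also have "\<dots> = (\<Sum>i<n. (B $$ (i,j) * m j w - A $$ (i,j)) * v $ i)"
      using j K v A B unfolding K_def BL
      by (auto simp: scalar_prod_def lessThan_atLeast0 intro!: sum.cong)
    also have "\<dots> = m j w * b j - a j"
      unfolding a_def b_def by (simp add: sum_subtractf sum_distrib_left algebra_simps)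
    finally show ?thesis by simp
  qed
  have symE: "(\<Sum>j<n. A $$ (i,j) * cnj (B $$ (k,j))) = (\<Sum>j<n. B $$ (i,j) * cnj (A $$ (k,j)))"
    if i: "i < n" and k: "k < n" for i k
  proof -
    have "(A * mat_adjoint B) $$ (i,k) = (B * mat_adjoint A) $$ (i,k)" using sym by simp
    thus ?thesis using i k A B by (simp add: scalar_prod_def lessThan_atLeast0)
  qed
  define S where "S = (\<Sum>j<n. a j * cnj (b j))"
  have ST: "S = (\<Sum>j<n. b j * cnj (a j))"
    unfolding S_def a_def b_def triple_sum using symE by (auto intro!: sum.cong)
  hence "S = cnj S" unfolding S_def by (simp add: mult.commute)
  hence ImS: "Im S = 0" by (metis Reals_cnj_iff complex_is_Real_iff)
  have "S = (\<Sum>j<n. m j w * of_real ((cmod (b j))\<^sup>2))"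
    unfolding S_def by (rule sum.cong) (simp_all only: ab complex_norm_square mult.assoc lessThan_iff)
  hence ImS2: "(\<Sum>j<n. Im (m j w) * (cmod (b j))\<^sup>2) = 0"
    using ImS by (simp add: Im_sum)
  have b0: "b j = 0" if j: "j < n" for j
  proof -
    from sgn show ?thesis
    proof
      assume pos: "\<forall>j<n. Im (m j w) > 0"
      have "\<forall>j\<in>{..<n}. Im (m j w) * (cmod (b j))\<^sup>2 = 0"
        by (rule sum_nonneg_eq_0_iff[THEN iffD1, OF _ _ ImS2]) (use pos in \<open>auto intro!: mult_nonneg_nonneg simp: less_imp_le\<close>)
      hence "Im (m j w) * (cmod (b j))\<^sup>2 = 0" using j by blast
      moreover have "Im (m j w) > 0" using pos j by blast
      ultimately show ?thesis by simp
    next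
      assume neg: "\<forall>j<n. Im (m j w) < 0"
      have "(\<Sum>j<n. - (Im (m j w) * (cmod (b j))\<^sup>2)) = 0"
        using ImS2 by (simp add: sum_negf)
      hence "\<forall>j\<in>{..<n}. - (Im (m j w) * (cmod (b j))\<^sup>2) = 0"
        by (rule sum_nonneg_eq_0_iff[THEN iffD1, rotated 2]) (use neg in \<open>auto simp: mult_nonpos_nonneg less_imp_le\<close>)
      hence "Im (m j w) * (cmod (b j))\<^sup>2 = 0" using j by simp
      moreover have "Im (m j w) < 0" using neg j by blast
      ultimately show ?thesis by simp
    qed
  qed
  define G where "G = append_cols A B"
  have G: "G \<in> carrier_mat n (n + n)" unfolding G_def using A B by auto
  have Gv: "transpose_mat G *\<^sub>v v = 0\<^sub>v (n + n)"
  proof (rule eq_vecI)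
    fix j assume "j < dim_vec (0\<^sub>v (n + n) :: complex vec)"
    hence j: "j < n + n" by simp
    have "(transpose_mat G *\<^sub>v v) $ j = (\<Sum>i<n. G $$ (i,j) * v $ i)"
      using j G v by (auto simp: scalar_prod_def lessThan_atLeast0 intro!: sum.cong)
    also have "\<dots> = (if j < n then a j else b (j - n))"
      unfolding a_def b_def G_def append_cols_def using j A B
      by (auto simp: mult.commute intro!: sum.cong)
    also have "\<dots> = 0" using b0 ab j by auto
    finally show "(transpose_mat G *\<^sub>v v) $ j = 0\<^sub>v (n + n) $ j" using j by simp
  qed (use G in simp)
  have "v = 0\<^sub>v n" by (rule rank_left_null[OF G rank[folded G_def] v Gv])
  with v0 show False by simp
qed



lemma (in ring) core_alg_ring:
  assumes c: "A \<in> carrier R" "B \<in> carrier R" "M \<in> carrier R" "Ns \<in> carrier R" "Bs \<in> carrier R"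
     "As \<in> carrier R" "X \<in> carrier R" "Y \<in> carrier R" "Xp \<in> carrier R"
    and F1: "X \<otimes> (B \<otimes> M \<ominus> A) = \<one>"
    and F2a: "Y \<otimes> (Ns \<otimes> Bs \<ominus> As) = \<one>" and F2b: "(Ns \<otimes> Bs \<ominus> As) \<otimes> Y = \<one>"
    and F3b: "(M \<otimes> Bs \<ominus> As) \<otimes> Xp = \<one>"
    and sym: "A \<otimes> Bs = B \<otimes> As"
  shows "\<ominus> (X \<otimes> B) \<ominus> \<ominus> (Bs \<otimes> Y) = Bs \<otimes> Y \<otimes> (M \<ominus> Ns) \<otimes> X \<otimes> B"
    "X \<otimes> B \<otimes> M \<ominus> Bs \<otimes> (Y \<otimes> Ns) = Bs \<otimes> Y \<otimes> (M \<ominus> Ns) \<otimes> X \<otimes> (\<ominus> A)"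
    "M \<otimes> X \<otimes> B \<ominus> Ns \<otimes> Bs \<otimes> Y = (\<ominus> As) \<otimes> Y \<otimes> (M \<ominus> Ns) \<otimes> X \<otimes> B"
    "(M \<ominus> M \<otimes> X \<otimes> B \<otimes> M) \<ominus> (Ns \<ominus> Ns \<otimes> Bs \<otimes> Y \<otimes> Ns) = (\<ominus> As) \<otimes> Y \<otimes> (M \<ominus> Ns) \<otimes> X \<otimes> (\<ominus> A)"
proof -
  have k: "B \<otimes> (M \<otimes> Bs \<ominus> As) = (B \<otimes> M \<ominus> A) \<otimes> Bs"
  proof -
    have "(B \<otimes> M \<ominus> A) \<otimes> Bs = B \<otimes> M \<otimes> Bs \<ominus> A \<otimes> Bs" using c by algebra
    also have "\<dots> = B \<otimes> M \<otimes> Bs \<ominus> B \<otimes> As" by (simp only: sym)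
    also have "\<dots> = B \<otimes> (M \<otimes> Bs \<ominus> As)" using c by algebra
    finally show ?thesis by simp
  qed
  have G1: "X \<otimes> B = Bs \<otimes> Xp"
  proof -
    have "X \<otimes> B = (X \<otimes> B) \<otimes> ((M \<otimes> Bs \<ominus> As) \<otimes> Xp)" using F3b c by simp
    also have "\<dots> = X \<otimes> (B \<otimes> (M \<otimes> Bs \<ominus> As)) \<otimes> Xp" using c by algebra
    also have "\<dots> = X \<otimes> ((B \<otimes> M \<ominus> A) \<otimes> Bs) \<otimes> Xp" by (simp only: k)
    also have "\<dots> = (X \<otimes> (B \<otimes> M \<ominus> A)) \<otimes> Bs \<otimes> Xp" using c by algebra
    also have "\<dots> = Bs \<otimes> Xp" using F1 c by simp
    finally show ?thesis .
  qed
  have G2: "Y \<otimes> (M \<ominus> Ns) \<otimes> Bs \<otimes> Xp = Y \<ominus> Xp"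
  proof -
    have "Y \<otimes> (M \<ominus> Ns) \<otimes> Bs \<otimes> Xp = Y \<otimes> ((M \<otimes> Bs \<ominus> As) \<otimes> Xp) \<ominus> (Y \<otimes> (Ns \<otimes> Bs \<ominus> As)) \<otimes> Xp"
      using c by algebra
    also have "\<dots> = Y \<ominus> Xp" using F3b F2a c by simp
    finally show ?thesis .
  qed
  have G3: "X \<otimes> A = Bs \<otimes> Xp \<otimes> M \<ominus> \<one>"
  proof -
    have "X \<otimes> A = X \<otimes> B \<otimes> M \<ominus> X \<otimes> (B \<otimes> M \<ominus> A)" using c by algebra
    also have "\<dots> = Bs \<otimes> Xp \<otimes> M \<ominus> \<one>" by (simp only: G1 F1)
    finally show ?thesis .
  qed
  have G4: "Ns \<otimes> Bs \<otimes> Y = \<one> \<oplus> As \<otimes> Y"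
  proof -
    have "Ns \<otimes> Bs \<otimes> Y = (Ns \<otimes> Bs \<ominus> As) \<otimes> Y \<oplus> As \<otimes> Y" using c by algebra
    also have "\<dots> = \<one> \<oplus> As \<otimes> Y" by (simp only: F2b)
    finally show ?thesis .
  qed
  have G5: "M \<otimes> Bs \<otimes> Xp = \<one> \<oplus> As \<otimes> Xp"
  proof -
    have "M \<otimes> Bs \<otimes> Xp = (M \<otimes> Bs \<ominus> As) \<otimes> Xp \<oplus> As \<otimes> Xp" using c by algebra
    also have "\<dots> = \<one> \<oplus> As \<otimes> Xp" by (simp only: F3b)
    finally show ?thesis .
  qed
  have YD: "Y \<otimes> (M \<ominus> Ns) \<in> carrier R" using c by simp
  show "\<ominus> (X \<otimes> B) \<ominus> \<ominus> (Bs \<otimes> Y) = Bs \<otimes> Y \<otimes> (M \<ominus> Ns) \<otimes> X \<otimes> B"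
  proof -
    have "Bs \<otimes> Y \<otimes> (M \<ominus> Ns) \<otimes> X \<otimes> B = Bs \<otimes> (Y \<otimes> (M \<ominus> Ns)) \<otimes> (X \<otimes> B)" using c by algebra
    also have "\<dots> = Bs \<otimes> (Y \<otimes> (M \<ominus> Ns)) \<otimes> (Bs \<otimes> Xp)" by (simp only: G1)
    also have "\<dots> = Bs \<otimes> (Y \<otimes> (M \<ominus> Ns) \<otimes> Bs \<otimes> Xp)" using c by algebra
    also have "\<dots> = Bs \<otimes> (Y \<ominus> Xp)" by (simp only: G2)
    also have "\<dots> = \<ominus> (Bs \<otimes> Xp) \<ominus> \<ominus> (Bs \<otimes> Y)" using c by algebra
    also have "\<dots> = \<ominus> (X \<otimes> B) \<ominus> \<ominus> (Bs \<otimes> Y)" by (simp only: G1)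
    finally show ?thesis by simp
  qed
  show "X \<otimes> B \<otimes> M \<ominus> Bs \<otimes> (Y \<otimes> Ns) = Bs \<otimes> Y \<otimes> (M \<ominus> Ns) \<otimes> X \<otimes> (\<ominus> A)"
  proof -
    have "Bs \<otimes> Y \<otimes> (M \<ominus> Ns) \<otimes> X \<otimes> (\<ominus> A) = \<ominus> (Bs \<otimes> (Y \<otimes> (M \<ominus> Ns)) \<otimes> (X \<otimes> A))" using c by algebra
    also have "\<dots> = \<ominus> (Bs \<otimes> (Y \<otimes> (M \<ominus> Ns)) \<otimes> (Bs \<otimes> Xp \<otimes> M \<ominus> \<one>))" by (simp only: G3)
    also have "\<dots> = \<ominus> (Bs \<otimes> (Y \<otimes> (M \<ominus> Ns) \<otimes> Bs \<otimes> Xp) \<otimes> M) \<oplus> Bs \<otimes> Y \<otimes> (M \<ominus> Ns)" using c by algebra (simp add: c)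
    also have "\<dots> = \<ominus> (Bs \<otimes> (Y \<ominus> Xp) \<otimes> M) \<oplus> Bs \<otimes> Y \<otimes> (M \<ominus> Ns)" by (simp only: G2)
    also have "\<dots> = Bs \<otimes> Xp \<otimes> M \<ominus> Bs \<otimes> (Y \<otimes> Ns)" using c by algebra
    also have "\<dots> = X \<otimes> B \<otimes> M \<ominus> Bs \<otimes> (Y \<otimes> Ns)" by (simp only: G1)
    finally show ?thesis by simp
  qed
  show "M \<otimes> X \<otimes> B \<ominus> Ns \<otimes> Bs \<otimes> Y = (\<ominus> As) \<otimes> Y \<otimes> (M \<ominus> Ns) \<otimes> X \<otimes> B"
  proof -
    have "(\<ominus> As) \<otimes> Y \<otimes> (M \<ominus> Ns) \<otimes> X \<otimes> B = \<ominus> (As \<otimes> (Y \<otimes> (M \<ominus> Ns)) \<otimes> (X \<otimes> B))" using c by algebra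
    also have "\<dots> = \<ominus> (As \<otimes> (Y \<otimes> (M \<ominus> Ns)) \<otimes> (Bs \<otimes> Xp))" by (simp only: G1)
    also have "\<dots> = \<ominus> (As \<otimes> (Y \<otimes> (M \<ominus> Ns) \<otimes> Bs \<otimes> Xp))" using c by algebra
    also have "\<dots> = \<ominus> (As \<otimes> (Y \<ominus> Xp))" by (simp only: G2)
    also have "\<dots> = (\<one> \<oplus> As \<otimes> Xp) \<ominus> (\<one> \<oplus> As \<otimes> Y)" using c by algebra
    also have "\<dots> = M \<otimes> Bs \<otimes> Xp \<ominus> Ns \<otimes> Bs \<otimes> Y" by (simp only: G4 G5)
    also have "\<dots> = M \<otimes> (Bs \<otimes> Xp) \<ominus> Ns \<otimes> Bs \<otimes> Y" using c by algebra
    also have "\<dots> = M \<otimes> (X \<otimes> B) \<ominus> Ns \<otimes> Bs \<otimes> Y" by (simp only: G1)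
    also have "\<dots> = M \<otimes> X \<otimes> B \<ominus> Ns \<otimes> Bs \<otimes> Y" using c by algebra
    finally show ?thesis by simp
  qed
  show "(M \<ominus> M \<otimes> X \<otimes> B \<otimes> M) \<ominus> (Ns \<ominus> Ns \<otimes> Bs \<otimes> Y \<otimes> Ns) = (\<ominus> As) \<otimes> Y \<otimes> (M \<ominus> Ns) \<otimes> X \<otimes> (\<ominus> A)"
  proof -
    have "(\<ominus> As) \<otimes> Y \<otimes> (M \<ominus> Ns) \<otimes> X \<otimes> (\<ominus> A) = As \<otimes> (Y \<otimes> (M \<ominus> Ns)) \<otimes> (X \<otimes> A)" using c by algebra
    also have "\<dots> = As \<otimes> (Y \<otimes> (M \<ominus> Ns)) \<otimes> (Bs \<otimes> Xp \<otimes> M \<ominus> \<one>)" by (simp only: G3)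
    also have "\<dots> = As \<otimes> (Y \<otimes> (M \<ominus> Ns) \<otimes> Bs \<otimes> Xp) \<otimes> M \<ominus> As \<otimes> Y \<otimes> (M \<ominus> Ns)" using c by algebra (simp add: c)
    also have "\<dots> = As \<otimes> (Y \<ominus> Xp) \<otimes> M \<ominus> As \<otimes> Y \<otimes> (M \<ominus> Ns)" by (simp only: G2)
    also have "\<dots> = (M \<ominus> (\<one> \<oplus> As \<otimes> Xp) \<otimes> M) \<ominus> (Ns \<ominus> (\<one> \<oplus> As \<otimes> Y) \<otimes> Ns)" using c by algebra
    also have "\<dots> = (M \<ominus> (M \<otimes> Bs \<otimes> Xp) \<otimes> M) \<ominus> (Ns \<ominus> (Ns \<otimes> Bs \<otimes> Y) \<otimes> Ns)" by (simp only: G4 G5)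
    also have "\<dots> = (M \<ominus> M \<otimes> (Bs \<otimes> Xp) \<otimes> M) \<ominus> (Ns \<ominus> Ns \<otimes> Bs \<otimes> Y \<otimes> Ns)" using c by algebra
    also have "\<dots> = (M \<ominus> M \<otimes> (X \<otimes> B) \<otimes> M) \<ominus> (Ns \<ominus> Ns \<otimes> Bs \<otimes> Y \<otimes> Ns)" by (simp only: G1)
    also have "\<dots> = (M \<ominus> M \<otimes> X \<otimes> B \<otimes> M) \<ominus> (Ns \<ominus> Ns \<otimes> Bs \<otimes> Y \<otimes> Ns)" using c by algebra
    finally show ?thesis by simp
  qed
qed


lemma core_alg_mat:
  fixes A B M Ns Bs As X Y Xp :: "complex mat"
  assumes c: "A \<in> carrier_mat n n" "B \<in> carrier_mat n n" "M \<in> carrier_mat n n" "Ns \<in> carrier_mat n n" "Bs \<in> carrier_mat n n"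
     "As \<in> carrier_mat n n" "X \<in> carrier_mat n n" "Y \<in> carrier_mat n n" "Xp \<in> carrier_mat n n"
    and F1: "X * (B * M - A) = 1\<^sub>m n"
    and F2a: "Y * (Ns * Bs - As) = 1\<^sub>m n" and F2b: "(Ns * Bs - As) * Y = 1\<^sub>m n"
    and F3b: "(M * Bs - As) * Xp = 1\<^sub>m n"
    and sym: "A * Bs = B * As"
  shows "- (X * B) - - (Bs * Y) = Bs * Y * (M - Ns) * X * B"
    "X * B * M - Bs * (Y * Ns) = Bs * Y * (M - Ns) * X * (- A)"
    "M * X * B - Ns * Bs * Y = (- As) * Y * (M - Ns) * X * B"
    "(M - M * X * B * M) - (Ns - Ns * Bs * Y * Ns) = (- As) * Y * (M - Ns) * X * (- A)"
proof -
  interpret R: ring "ring_mat TYPE(complex) n n" by (rule ring_mat)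
  let ?R = "ring_mat TYPE(complex) n n"
  have inv: "\<ominus>\<^bsub>?R\<^esub> P = - P" if "P \<in> carrier_mat n n" for P
    by (rule R.minus_equality) (use that in \<open>auto simp: ring_mat_simps\<close>)
  have mi: "P \<ominus>\<^bsub>?R\<^esub> Q = P - Q" if "P \<in> carrier_mat n n" "Q \<in> carrier_mat n n" for P Q
    unfolding a_minus_def using that by (simp add: inv ring_mat_simps add_uminus_minus_mat)
  have cc: "A \<in> carrier ?R" "B \<in> carrier ?R" "M \<in> carrier ?R" "Ns \<in> carrier ?R" "Bs \<in> carrier ?R"
     "As \<in> carrier ?R" "X \<in> carrier ?R" "Y \<in> carrier ?R" "Xp \<in> carrier ?R"
    using c by (simp_all add: ring_mat_simps)
  have h1: "X \<otimes>\<^bsub>?R\<^esub> (B \<otimes>\<^bsub>?R\<^esub> M \<ominus>\<^bsub>?R\<^esub> A) = \<one>\<^bsub>?R\<^esub>"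
    using F1 c by (simp add: ring_mat_simps mi)
  have h2: "Y \<otimes>\<^bsub>?R\<^esub> (Ns \<otimes>\<^bsub>?R\<^esub> Bs \<ominus>\<^bsub>?R\<^esub> As) = \<one>\<^bsub>?R\<^esub>"
    using F2a c by (simp add: ring_mat_simps mi)
  have h3: "(Ns \<otimes>\<^bsub>?R\<^esub> Bs \<ominus>\<^bsub>?R\<^esub> As) \<otimes>\<^bsub>?R\<^esub> Y = \<one>\<^bsub>?R\<^esub>"
    using F2b c by (simp add: ring_mat_simps mi)
  have h4: "(M \<otimes>\<^bsub>?R\<^esub> Bs \<ominus>\<^bsub>?R\<^esub> As) \<otimes>\<^bsub>?R\<^esub> Xp = \<one>\<^bsub>?R\<^esub>"
    using F3b c by (simp add: ring_mat_simps mi)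
  have h5: "A \<otimes>\<^bsub>?R\<^esub> Bs = B \<otimes>\<^bsub>?R\<^esub> As" using sym by (simp add: ring_mat_simps)
  note core = R.core_alg_ring[OF cc h1 h2 h3 h4 h5]
  have mc: "P * Q \<in> carrier_mat n n" if "P \<in> carrier_mat n n" "Q \<in> carrier_mat n n" for P Q :: "complex mat"
    using that by simp
  have mm: "P - Q \<in> carrier_mat n n" if "P \<in> carrier_mat n n" "Q \<in> carrier_mat n n" for P Q :: "complex mat"
    using that(2) by (rule minus_carrier_mat)
  show "- (X * B) - - (Bs * Y) = Bs * Y * (M - Ns) * X * B"
    using core(1) c by (simp add: ring_mat_simps mi inv)
  show "X * B * M - Bs * (Y * Ns) = Bs * Y * (M - Ns) * X * (- A)"
    using core(2) c by (simp add: ring_mat_simps mi inv)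
  show "M * X * B - Ns * Bs * Y = (- As) * Y * (M - Ns) * X * B"
    using core(3) c by (simp add: ring_mat_simps mi inv)
  show "(M - M * X * B * M) - (Ns - Ns * Bs * Y * Ns) = (- As) * Y * (M - Ns) * X * (- A)"
    using core(4) c by (simp add: ring_mat_simps mi inv mc mm)
qed

lemma minv_props: assumes K: "K \<in> carrier_mat n n" and dK: "det K \<noteq> 0"
  shows "minv K \<in> carrier_mat n n" "K * minv K = 1\<^sub>m n" "minv K * K = 1\<^sub>m n"
proof -
  have U: "K \<in> Units (ring_mat TYPE(complex) n n)" by (rule det_non_zero_imp_unit[OF K dK])
  obtain W where S: "mat_inverse K = Some W"
  proof (cases "mat_inverse K")
    case None
    with mat_inverse(1)[OF K None, of n] U show ?thesis by blast
  qed
  from mat_inverse(2)[OF K S] show "minv K \<in> carrier_mat n n" "K * minv K = 1\<^sub>m n" "minv K * K = 1\<^sub>m n"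
    unfolding minv_def S by auto
qed

lemma sgn_lemma:
  assumes refl: "\<And>j w. j < n \<Longrightarrow> w \<notin> \<real> \<Longrightarrow> m j (cnj w) = cnj (m j w)"
    and nev: "\<And>j w. j < n \<Longrightarrow> Im w > 0 \<Longrightarrow> Im (m j w) > 0"
    and w: "w \<notin> \<real>"
  shows "(\<forall>j<n. Im (m j w) > 0) \<or> (\<forall>j<n. Im (m j w) < 0)"
proof -
  have "Im w \<noteq> 0" using w by (simp add: complex_is_Real_iff)
  hence "Im w > 0 \<or> Im w < 0" by linarith
  thus ?thesis
  proof
    assume "Im w > 0" thus ?thesis using nev by blast
  next
    assume neg: "Im w < 0"
    have "Im (m j w) < 0" if j: "j < n" for j
    proof -
      have cw: "cnj w \<notin> \<real>" using w by (simp add: Reals_cnj_iff)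
      have "m j w = m j (cnj (cnj w))" by simp
      also have "\<dots> = cnj (m j (cnj w))" by (rule refl[OF j cw])
      finally have "Im (m j w) = - Im (m j (cnj w))" by simp
      moreover have "Im (m j (cnj w)) > 0" using nev[OF j] neg by simp
      ultimately show ?thesis by simp
    qed
    thus ?thesis by blast
  qed
qed

lemma P_blocks:
  assumes A: "A \<in> carrier_mat n n" and B: "B \<in> carrier_mat n n"
    and cX: "minv (B * Mdiag n m w - A) \<in> carrier_mat n n"
  shows "Pmat n A B m w = four_block_mat (- (minv (B * Mdiag n m w - A) * B)) (minv (B * Mdiag n m w - A) * B * Mdiag n m w)
      (Mdiag n m w * minv (B * Mdiag n m w - A) * B) (Mdiag n m w - Mdiag n m w * minv (B * Mdiag n m w - A) * B * Mdiag n m w)"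
proof -
  define L where "L = Mdiag n m w"
  define X where "X = minv (B * L - A)"
  have L: "L \<in> carrier_mat n n" unfolding L_def by simp
  have X: "X \<in> carrier_mat n n" using cX unfolding X_def L_def .
  have one: "- 1\<^sub>m n \<in> carrier_mat n n" by simp
  have "((- 1\<^sub>m n) @\<^sub>r L) * X * B * append_cols (- 1\<^sub>m n) L
     = (((- 1\<^sub>m n) * X * B) @\<^sub>r (L * X * B)) * append_cols (- 1\<^sub>m n) L"
  proof -
    have s1: "((- 1\<^sub>m n) @\<^sub>r L) * X = ((- 1\<^sub>m n) * X) @\<^sub>r (L * X)" by (rule mult_append_rows[OF one L X])
    have s2: "(((- 1\<^sub>m n) * X) @\<^sub>r (L * X)) * B = ((- 1\<^sub>m n) * X * B) @\<^sub>r (L * X * B)"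
      by (rule mult_append_rows) (use X L B in auto)
    show ?thesis unfolding s1 s2 ..
  qed
  also have "\<dots> = four_block_mat ((- 1\<^sub>m n) * X * B * (- 1\<^sub>m n)) ((- 1\<^sub>m n) * X * B * L)
       (L * X * B * (- 1\<^sub>m n)) (L * X * B * L)"
    by (rule append_rows_mult_cols) (use X L B in auto)
  also have "\<dots> = four_block_mat (X * B) (- (X * B * L)) (- (L * X * B)) (L * X * B * L)"
    using X L B by simp
  finally have e: "((- 1\<^sub>m n) @\<^sub>r L) * X * B * append_cols (- 1\<^sub>m n) L = four_block_mat (X * B) (- (X * B * L)) (- (L * X * B)) (L * X * B * L)" .
  have "Pmat n A B m w = four_block_mat (0\<^sub>m n n) (0\<^sub>m n n) (0\<^sub>m n n) L - four_block_mat (X * B) (- (X * B * L)) (- (L * X * B)) (L * X * B * L)"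
    unfolding Pmat_def L_def[symmetric] X_def[symmetric] e ..
  also have "\<dots> = four_block_mat (0\<^sub>m n n - X * B) (0\<^sub>m n n - - (X * B * L)) (0\<^sub>m n n - - (L * X * B)) (L - L * X * B * L)"
    by (rule minus_fbm) (use X L B in auto)
  also have "\<dots> = four_block_mat (- (X * B)) (X * B * L) (L * X * B) (L - L * X * B * L)"
    by (rule cong_four_block_mat) (use X L B in \<open>auto intro!: eq_matI\<close>)
  finally show ?thesis unfolding X_def L_def .
qed



theorem lemma4p3:
  fixes n :: nat and A B :: "complex mat" and m :: "nat \<Rightarrow> complex \<Rightarrow> complex"
    and z \<zeta> :: complex
  assumes A: "A \<in> carrier_mat n n" and B: "B \<in> carrier_mat n n"
    and rank: "vec_space.rank n (append_cols A B) = n"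
    and sym: "A * mat_adjoint B = B * mat_adjoint A"
    and mero: "\<And>j. j < n \<Longrightarrow> m j meromorphic_on UNIV"
    and holo: "\<And>j. j < n \<Longrightarrow> m j holomorphic_on (- \<real>)"
    and refl: "\<And>j w. j < n \<Longrightarrow> w \<notin> \<real> \<Longrightarrow> m j (cnj w) = cnj (m j w)"
    and nev: "\<And>j w. j < n \<Longrightarrow> Im w > 0 \<Longrightarrow> Im (m j w) > 0"
    and z: "z \<notin> \<real>" and \<zeta>: "\<zeta> \<notin> \<real>" and ne: "z \<noteq> cnj \<zeta>"
  shows "(1 / (z - cnj \<zeta>)) \<cdot>\<^sub>m (Pmat n A B m z - mat_adjoint (Pmat n A B m \<zeta>)) =
    (mat_adjoint B @\<^sub>r (- mat_adjoint A))
    * minv (mat_adjoint (Mdiag n m \<zeta>) * mat_adjoint B - mat_adjoint A)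
    * ((1 / (z - cnj \<zeta>)) \<cdot>\<^sub>m (Mdiag n m z - mat_adjoint (Mdiag n m \<zeta>)))
    * minv (B * Mdiag n m z - A)
    * append_cols B (- A)"
proof -
  note [simp] = minus_carrier_mat
  have mcn[simp]: "P * Q \<in> carrier_mat n n" if "P \<in> carrier_mat n n" "Q \<in> carrier_mat n n" for P Q :: "complex mat"
    using that by simp
  define c where "c = 1 / (z - cnj \<zeta>)"
  define M where "M = Mdiag n m z"
  define N where "N = Mdiag n m \<zeta>"
  define Mc where "Mc = Mdiag n m (cnj z)"
  have cM: "M \<in> carrier_mat n n" and cN: "N \<in> carrier_mat n n" and cMc: "Mc \<in> carrier_mat n n"
    unfolding M_def N_def Mc_def by simp_all
  have cz: "cnj z \<notin> \<real>" using z by (simp add: Reals_cnj_iff)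
  have dM: "det (B * M - A) \<noteq> 0" unfolding M_def
    by (rule inv_core[where m=m and w=z, OF A B rank sym sgn_lemma[of n m, OF refl nev z]])
  have dN: "det (B * N - A) \<noteq> 0" unfolding N_def
    by (rule inv_core[where m=m and w=\<zeta>, OF A B rank sym sgn_lemma[of n m, OF refl nev \<zeta>]])
  have dMc: "det (B * Mc - A) \<noteq> 0" unfolding Mc_def
    by (rule inv_core[where m=m and w="cnj z", OF A B rank sym sgn_lemma[of n m, OF refl nev cz]])
  have cK1: "B * M - A \<in> carrier_mat n n" using A B cM by simp
  have cK2: "B * N - A \<in> carrier_mat n n" using A B cN by simp
  have cK3: "B * Mc - A \<in> carrier_mat n n" using A B cMc by simp
  define X where "X = minv (B * M - A)"
  define Xz where "Xz = minv (B * N - A)"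
  define W where "W = minv (B * Mc - A)"
  note pX = minv_props[OF cK1 dM, folded X_def]
  note pXz = minv_props[OF cK2 dN, folded Xz_def]
  note pW = minv_props[OF cK3 dMc, folded W_def]
  define Bs where "Bs = mat_adjoint B"
  define As where "As = mat_adjoint A"
  define Ns where "Ns = mat_adjoint N"
  define Y where "Y = mat_adjoint Xz"
  define Xp where "Xp = mat_adjoint W"
  have cBs: "Bs \<in> carrier_mat n n" and cAs: "As \<in> carrier_mat n n" and cNs: "Ns \<in> carrier_mat n n"
    and cY: "Y \<in> carrier_mat n n" and cXp: "Xp \<in> carrier_mat n n"
    unfolding Bs_def As_def Ns_def Y_def Xp_def using B A cN pXz(1) pW(1) by auto
  have adjM: "mat_adjoint M = Mc" unfolding M_def Mc_def by (rule adj_Mdiag) (rule refl[OF _ z])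
  hence adjMc: "mat_adjoint Mc = M" using adj_adj by metis
  have e1: "Ns * Bs - As = mat_adjoint (B * N - A)"
    unfolding Ns_def Bs_def As_def using B A cN by (simp add: adj_minus[where r=n and c=n] adj_mult[where r=n and k=n and c=n])
  have e2: "M * Bs - As = mat_adjoint (B * Mc - A)"
    unfolding Bs_def As_def using B A cMc by (simp add: adj_minus[where r=n and c=n] adj_mult[where r=n and k=n and c=n] adjMc)
  have F2b: "(Ns * Bs - As) * Y = 1\<^sub>m n"
    unfolding e1 Y_def using adj_mult[OF pXz(1) cK2] pXz(3) by (simp add: adj_one)
  have F2a: "Y * (Ns * Bs - As) = 1\<^sub>m n"
    unfolding e1 Y_def using adj_mult[OF cK2 pXz(1)] pXz(2) by (simp add: adj_one)
  have F3b: "(M * Bs - As) * Xp = 1\<^sub>m n"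
    unfolding e2 Xp_def using adj_mult[OF pW(1) cK3] pW(3) by (simp add: adj_one)
  have sym': "A * Bs = B * As" using sym unfolding Bs_def As_def .
  note core = core_alg_mat[OF A B cM cNs cBs cAs pX(1) cY cXp pX(3) F2a F2b F3b sym']
  have cK4: "Ns * Bs - As \<in> carrier_mat n n" using cNs cBs cAs by simp
  have minvY: "minv (Ns * Bs - As) = Y" by (rule minv_eq[OF cK4 cY F2b F2a])
  have PZ: "Pmat n A B m z = four_block_mat (- (X * B)) (X * B * M) (M * X * B) (M - M * X * B * M)"
    unfolding X_def M_def by (rule P_blocks[OF A B]) (use pX(1) in \<open>simp add: X_def M_def\<close>)
  have PZe: "Pmat n A B m \<zeta> = four_block_mat (- (Xz * B)) (Xz * B * N) (N * Xz * B) (N - N * Xz * B * N)"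
    unfolding Xz_def N_def by (rule P_blocks[OF A B]) (use pXz(1) in \<open>simp add: Xz_def N_def\<close>)
  note cs = A B cM cN cNs cBs cAs cY cXp pX(1) pXz(1)
  have adjP: "mat_adjoint (Pmat n A B m \<zeta>) = four_block_mat (- (Bs * Y)) (Bs * (Y * Ns)) (Ns * Bs * Y) (Ns - Ns * Bs * Y * Ns)"
  proof -
    have "mat_adjoint (Pmat n A B m \<zeta>) = four_block_mat (mat_adjoint (- (Xz * B))) (mat_adjoint (N * Xz * B))
        (mat_adjoint (Xz * B * N)) (mat_adjoint (N - N * Xz * B * N))"
      unfolding PZe by (rule adj_fbm) (use cs in auto)
    also have "\<dots> = four_block_mat (- (Bs * Y)) (Bs * (Y * Ns)) (Ns * Bs * Y) (Ns - Ns * Bs * Y * Ns)"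
    proof (rule cong_four_block_mat)
      have cNX: "N * Xz \<in> carrier_mat n n" "Xz * B \<in> carrier_mat n n" "N * Xz * B \<in> carrier_mat n n"
        "N * Xz * B * N \<in> carrier_mat n n" using cs by simp_all
      show "mat_adjoint (- (Xz * B)) = - (Bs * Y)"
        unfolding adj_uminus adj_mult[OF pXz(1) B] Bs_def Y_def ..
      show "mat_adjoint (N * Xz * B) = Bs * (Y * Ns)"
        unfolding adj_mult[OF cNX(1) B] adj_mult[OF cN pXz(1)] Bs_def Y_def Ns_def ..
      have "mat_adjoint (Xz * B * N) = Ns * (Bs * Y)"
        unfolding adj_mult[OF cNX(2) cN] adj_mult[OF pXz(1) B] Bs_def Y_def Ns_def ..
      thus "mat_adjoint (Xz * B * N) = Ns * Bs * Y" using cs by simp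
      have "mat_adjoint (N - N * Xz * B * N) = Ns - Ns * (Bs * (Y * Ns))"
        unfolding adj_minus[OF cN cNX(4)] adj_mult[OF cNX(3) cN] adj_mult[OF cNX(1) B] adj_mult[OF cN pXz(1)]
          Bs_def Y_def Ns_def ..
      moreover have "Ns * (Bs * (Y * Ns)) = Ns * Bs * Y * Ns"
        unfolding assoc_mult_mat[OF mcn[OF cNs cBs] cY cNs] assoc_mult_mat[OF cNs cBs mcn[OF cY cNs]] ..
      ultimately show "mat_adjoint (N - N * Xz * B * N) = Ns - Ns * Bs * Y * Ns" by simp
    qed
    finally show ?thesis .
  qed
  have cD: "M - Ns \<in> carrier_mat n n" using cM cNs by simp
  have LHS: "c \<cdot>\<^sub>m (Pmat n A B m z - mat_adjoint (Pmat n A B m \<zeta>)) =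
     four_block_mat (c \<cdot>\<^sub>m (- (X * B) - - (Bs * Y))) (c \<cdot>\<^sub>m (X * B * M - Bs * (Y * Ns)))
       (c \<cdot>\<^sub>m (M * X * B - Ns * Bs * Y)) (c \<cdot>\<^sub>m ((M - M * X * B * M) - (Ns - Ns * Bs * Y * Ns)))"
  proof -
    have "Pmat n A B m z - mat_adjoint (Pmat n A B m \<zeta>) = four_block_mat (- (X * B) - - (Bs * Y)) (X * B * M - Bs * (Y * Ns))
       (M * X * B - Ns * Bs * Y) ((M - M * X * B * M) - (Ns - Ns * Bs * Y * Ns))"
      unfolding PZ adjP by (rule minus_fbm) (use cs in auto)
    also have "c \<cdot>\<^sub>m \<dots> = four_block_mat (c \<cdot>\<^sub>m (- (X * B) - - (Bs * Y))) (c \<cdot>\<^sub>m (X * B * M - Bs * (Y * Ns)))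
       (c \<cdot>\<^sub>m (M * X * B - Ns * Bs * Y)) (c \<cdot>\<^sub>m ((M - M * X * B * M) - (Ns - Ns * Bs * Y * Ns)))"
      by (rule smult_four_block_mat) (use cs in auto)
    finally show ?thesis .
  qed
  have RHS: "(Bs @\<^sub>r (- As)) * Y * (c \<cdot>\<^sub>m (M - Ns)) * X * append_cols B (- A) =
     four_block_mat (Bs * Y * (c \<cdot>\<^sub>m (M - Ns)) * X * B) (Bs * Y * (c \<cdot>\<^sub>m (M - Ns)) * X * (- A))
       ((- As) * Y * (c \<cdot>\<^sub>m (M - Ns)) * X * B) ((- As) * Y * (c \<cdot>\<^sub>m (M - Ns)) * X * (- A))"
  proof -
    have s1: "(Bs @\<^sub>r (- As)) * Y = (Bs * Y) @\<^sub>r ((- As) * Y)"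
      by (rule mult_append_rows) (use cs in auto)
    have s2: "((Bs * Y) @\<^sub>r ((- As) * Y)) * (c \<cdot>\<^sub>m (M - Ns)) = (Bs * Y * (c \<cdot>\<^sub>m (M - Ns))) @\<^sub>r ((- As) * Y * (c \<cdot>\<^sub>m (M - Ns)))"
      by (rule mult_append_rows) (use cs cD in auto)
    have s3: "((Bs * Y * (c \<cdot>\<^sub>m (M - Ns))) @\<^sub>r ((- As) * Y * (c \<cdot>\<^sub>m (M - Ns)))) * X
       = (Bs * Y * (c \<cdot>\<^sub>m (M - Ns)) * X) @\<^sub>r ((- As) * Y * (c \<cdot>\<^sub>m (M - Ns)) * X)"
      by (rule mult_append_rows) (use cs cD in auto)
    show ?thesis unfolding s1 s2 s3
      by (rule append_rows_mult_cols) (use cs cD in auto)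
  qed
  have sc: "P * (c \<cdot>\<^sub>m D) * Q * R = c \<cdot>\<^sub>m (P * D * Q * R)"
    if "P \<in> carrier_mat n n" "D \<in> carrier_mat n n" "Q \<in> carrier_mat n n" "R \<in> carrier_mat n n" for P D Q R :: "complex mat"
    using that by (simp add: mult_smult_distrib[where nr=n and n=n and nc=n] mult_smult_assoc_mat[where nr=n and n=n and nc=n])
  have "c \<cdot>\<^sub>m (Pmat n A B m z - mat_adjoint (Pmat n A B m \<zeta>)) =
    (Bs @\<^sub>r (- As)) * Y * (c \<cdot>\<^sub>m (M - Ns)) * X * append_cols B (- A)"
    unfolding LHS RHS
  proof (rule cong_four_block_mat)
    show "c \<cdot>\<^sub>m (- (X * B) - - (Bs * Y)) = Bs * Y * (c \<cdot>\<^sub>m (M - Ns)) * X * B"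
      unfolding core(1) by (rule sc[symmetric]) (use cs cD in auto)
    show "c \<cdot>\<^sub>m (X * B * M - Bs * (Y * Ns)) = Bs * Y * (c \<cdot>\<^sub>m (M - Ns)) * X * (- A)"
      unfolding core(2) by (rule sc[symmetric]) (use cs cD in auto)
    show "c \<cdot>\<^sub>m (M * X * B - Ns * Bs * Y) = (- As) * Y * (c \<cdot>\<^sub>m (M - Ns)) * X * B"
      unfolding core(3) by (rule sc[symmetric]) (use cs cD in auto)
    show "c \<cdot>\<^sub>m ((M - M * X * B * M) - (Ns - Ns * Bs * Y * Ns)) = (- As) * Y * (c \<cdot>\<^sub>m (M - Ns)) * X * (- A)"
      unfolding core(4) by (rule sc[symmetric]) (use cs cD in auto)
  qed
  thus ?thesis unfolding c_def M_def N_def Ns_def Bs_def As_def X_def minvY[symmetric] .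
qed

end
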